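(* Let $A\in\mathbb{C}^{n\times n}$ and let $\bar{A}$ denote its entrywise complex conjugate. Then $A$ is G-Hamiltonian if and only if $A$ is similar to $-\bar{A}$, i.e. there exists an invertible $Q\in\mathbb{C}^{n\times n}$ with $Q^{-1}AQ=-\bar{A}$.
   Context: A matrix $A\in\mathbb{C}^{n\times n}$ is called G-Hamiltonian if there exist a non-singular Hermitian matrix $G\in\mathbb{C}^{n\times n}$ and a Hermitian matrix $S\in\mathbb{C}^{n\times n}$ such that $A=iG^{-1}S$. *)

theory Defs
  imports "HOL-Analysis.Analysis"
begin

definition mat_cnj :: "complex^'n^'n \<Rightarrow> complex^'n^'n" where
  "mat_cnj A = (\<chi> i j. cnj (A $ i $ j))"

definition adjoint_mat :: "complex^'n^'n \<Rightarrow> complex^'n^'n" where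
  "adjoint_mat A = transpose (mat_cnj A)"

definition hermitian_mat :: "complex^'n^'n \<Rightarrow> bool" where
  "hermitian_mat A \<longleftrightarrow> adjoint_mat A = A"

definition G_Hamiltonian :: "complex^'n^'n \<Rightarrow> bool" where
  "G_Hamiltonian A \<longleftrightarrow> (\<exists>G S. invertible G \<and> hermitian_mat G \<and> hermitian_mat S \<and>
      A = mat \<i> ** (matrix_inv G ** S))"

end

theory Submission
  imports Defs "Jordan_Normal_Form.Jordan_Normal_Form_Existence"
begin


definition revm :: "nat \<Rightarrow> 'a::{zero,one} mat" where
  "revm n = Matrix.mat n n (\<lambda>(i,j). if i + j = n - 1 then 1 else 0)"

lemma revm_carrier[simp]: "revm n \<in> carrier_mat n n"
  by (simp add: revm_def)

lemma revm_dim[simp]: "dim_row (revm n) = n" "dim_col (revm n) = n"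
  by (simp_all add: revm_def)

lemma revm_left:
  fixes B :: "'a::comm_ring_1 mat"
  assumes B: "B \<in> carrier_mat n m" and i: "i < n" and j: "j < m"
  shows "(revm n * B) $$ (i,j) = B $$ (n - 1 - i, j)"
proof -
  have "(revm n * B) $$ (i,j) = (\<Sum>k\<in>{0..<n}. revm n $$ (i,k) * B $$ (k,j))"
    using B i j by (simp add: index_mult_mat scalar_prod_def revm_def)
  also have "\<dots> = (\<Sum>k\<in>{0..<n}. if k = n - 1 - i then B $$ (k,j) else 0)"
  proof (rule sum.cong[OF refl])
    fix k assume "k \<in> {0..<n}"
    hence "(i + k = n - 1) = (k = n - 1 - i)" using i by auto
    thus "revm n $$ (i,k) * B $$ (k,j) = (if k = n - 1 - i then B $$ (k,j) else 0)"
      using i \<open>k \<in> {0..<n}\<close> by (simp add: revm_def)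
  qed
  also have "\<dots> = B $$ (n - 1 - i, j)" using i by simp
  finally show ?thesis .
qed

lemma revm_right:
  fixes B :: "'a::comm_ring_1 mat"
  assumes B: "B \<in> carrier_mat m n" and i: "i < m" and j: "j < n"
  shows "(B * revm n) $$ (i,j) = B $$ (i, n - 1 - j)"
proof -
  have "(B * revm n) $$ (i,j) = (\<Sum>k\<in>{0..<n}. B $$ (i,k) * revm n $$ (k,j))"
    using B i j by (simp add: index_mult_mat scalar_prod_def revm_def)
  also have "\<dots> = (\<Sum>k\<in>{0..<n}. if k = n - 1 - j then B $$ (i,k) else 0)"
  proof (rule sum.cong[OF refl])
    fix k assume "k \<in> {0..<n}"
    hence "(k + j = n - 1) = (k = n - 1 - j)" using j by auto
    thus "B $$ (i,k) * revm n $$ (k,j) = (if k = n - 1 - j then B $$ (i,k) else 0)"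
      using j \<open>k \<in> {0..<n}\<close> by (simp add: revm_def)
  qed
  also have "\<dots> = B $$ (i, n - 1 - j)" using j by simp
  finally show ?thesis .
qed

lemma revm_sq: "(revm n :: 'a::comm_ring_1 mat) * revm n = 1\<^sub>m n"
proof (rule eq_matI)
  fix i j assume i: "i < dim_row (1\<^sub>m n :: 'a mat)" and j: "j < dim_col (1\<^sub>m n :: 'a mat)"
  hence "(revm n * revm n) $$ (i,j) = (revm n :: 'a mat) $$ (n - 1 - i, j)"
    by (intro revm_left) auto
  also have "\<dots> = 1\<^sub>m n $$ (i,j)" using i j by (auto simp: revm_def)
  finally show "(revm n * revm n) $$ (i,j) = (1\<^sub>m n :: 'a mat) $$ (i,j)" .
qed auto

lemma jordan_block_transpose_sim:
  "similar_mat (transpose_mat (jordan_block n (a::'a::comm_ring_1))) (jordan_block n a)"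
proof (rule similar_matI[where n=n and P="revm n :: 'a mat" and Q="revm n :: 'a mat"])
  show "transpose_mat (jordan_block n a) = revm n * jordan_block n a * revm n"
  proof (rule eq_matI)
    fix i j assume i: "i < dim_row (revm n * jordan_block n a * revm n)"
      and j: "j < dim_col (revm n * jordan_block n a * revm n)"
    hence i: "i < n" and j: "j < n" by auto
    have c: "revm n * jordan_block n a \<in> carrier_mat n n" by auto
    have "(revm n * jordan_block n a * revm n) $$ (i,j) = (revm n * jordan_block n a) $$ (i, n - 1 - j)"
      by (rule revm_right[OF c i j])
    also have "\<dots> = jordan_block n a $$ (n - 1 - i, n - 1 - j)"
      by (rule revm_left) (use i j in auto)
    also have "\<dots> = transpose_mat (jordan_block n a) $$ (i,j)"
      using i j by auto
    finally show "transpose_mat (jordan_block n a) $$ (i,j) = (revm n * jordan_block n a * revm n) $$ (i,j)" by simp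
  qed auto
qed (auto simp: revm_sq)

lemma similar_mat_transpose:
  fixes A B :: "'a::comm_ring_1 mat"
  assumes "similar_mat A B"
  shows "similar_mat (transpose_mat A) (transpose_mat B)"
proof -
  from similar_matD[OF assms] obtain n P Q where
    c: "{A, B, P, Q} \<subseteq> carrier_mat n n" and PQ: "P * Q = 1\<^sub>m n" and QP: "Q * P = 1\<^sub>m n"
    and A: "A = P * B * Q" by blast
  hence cs: "A \<in> carrier_mat n n" "B \<in> carrier_mat n n" "P \<in> carrier_mat n n" "Q \<in> carrier_mat n n" by auto
  show ?thesis
  proof (rule similar_matI[where n=n and P="transpose_mat Q" and Q="transpose_mat P"])
    show "transpose_mat Q * transpose_mat P = 1\<^sub>m n"
      using transpose_mult[OF cs(3) cs(4), symmetric] PQ by simp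
    show "transpose_mat P * transpose_mat Q = 1\<^sub>m n"
      using transpose_mult[OF cs(4) cs(3), symmetric] QP by simp
    have PB: "P * B \<in> carrier_mat n n" using cs by simp
    have "transpose_mat A = transpose_mat Q * transpose_mat (P * B)"
      unfolding A by (rule transpose_mult[OF PB cs(4)])
    also have "transpose_mat (P * B) = transpose_mat B * transpose_mat P"
      by (rule transpose_mult[OF cs(3) cs(2)])
    also have "transpose_mat Q * (transpose_mat B * transpose_mat P) = transpose_mat Q * transpose_mat B * transpose_mat P"
      by (rule assoc_mult_mat[symmetric, of _ n n _ n _ n]) (use cs in auto)
    finally show "transpose_mat A = transpose_mat Q * transpose_mat B * transpose_mat P" .
  qed (use cs in auto)
qed

lemma jordan_matrix_transpose_sim:
  "similar_mat (transpose_mat (jordan_matrix (n_as :: (nat \<times> 'a::comm_ring_1) list))) (jordan_matrix n_as)"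
proof (induct n_as)
  case Nil
  have "transpose_mat (jordan_matrix ([] :: (nat \<times> 'a) list)) = jordan_matrix []"
    by (rule eq_matI) (auto simp: jordan_matrix_def)
  thus ?case
    by (metis similar_mat_refl jordan_matrix_carrier)
next
  case (Cons na n_as)
  obtain n a where na: "na = (n,a)" by force
  let ?m = "sum_list (map fst n_as)"
  have JM: "jordan_matrix n_as \<in> carrier_mat ?m ?m" by auto
  have J: "jordan_block n a \<in> carrier_mat n n" by simp
  have T: "transpose_mat (four_block_mat (jordan_block n a) (0\<^sub>m n ?m) (0\<^sub>m ?m n) (jordan_matrix n_as))
     = four_block_mat (transpose_mat (jordan_block n a)) (transpose_mat (0\<^sub>m ?m n))
         (transpose_mat (0\<^sub>m n ?m)) (transpose_mat (jordan_matrix n_as))"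
    by (rule transpose_four_block_mat[OF J _ _ JM]) auto
  have z1: "transpose_mat (0\<^sub>m ?m n :: 'a mat) = 0\<^sub>m n ?m"
    and z2: "transpose_mat (0\<^sub>m n ?m :: 'a mat) = 0\<^sub>m ?m n"
    by (rule eq_matI; simp)+
  have JT: "transpose_mat (jordan_block n a) \<in> carrier_mat n n" by simp
  have JMT: "transpose_mat (jordan_matrix n_as) \<in> carrier_mat ?m ?m" using JM by simp
  show ?case unfolding na jordan_matrix_Cons T z1 z2
    by (rule similar_mat_four_block_0_0[OF jordan_block_transpose_sim Cons JT JMT])
qed

lemma complex_transpose_sim:
  fixes A :: "complex mat"
  assumes A: "A \<in> carrier_mat n n"
  shows "similar_mat (transpose_mat A) A"
proof -
  from char_poly_factorized[OF A] obtain as where "char_poly A = (\<Prod>a\<leftarrow>as. [:- a, 1:])" by auto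
  from jordan_nf_exists[OF A this] obtain n_as where "jordan_nf A n_as" ..
  hence s: "similar_mat A (jordan_matrix n_as)" by (simp add: jordan_nf_def)
  have "similar_mat (transpose_mat A) (transpose_mat (jordan_matrix n_as))"
    by (rule similar_mat_transpose[OF s])
  hence "similar_mat (transpose_mat A) (jordan_matrix n_as)"
    by (rule similar_mat_trans[OF _ jordan_matrix_transpose_sim])
  thus ?thesis by (rule similar_mat_trans[OF _ similar_mat_sym[OF s]])
qed


definition idxn :: "'n::finite \<Rightarrow> nat" where "idxn = to_nat_on (UNIV :: 'n set)"
definition idxi :: "nat \<Rightarrow> 'n::finite" where "idxi = inv_into UNIV idxn"

lemma idxn_bij: "bij_betw (idxn :: 'n::finite \<Rightarrow> nat) UNIV {..<CARD('n)}"
  unfolding idxn_def by (rule to_nat_on_finite) simp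

lemma idxn_lt[simp]: "idxn (x :: 'n::finite) < CARD('n)"
  using idxn_bij unfolding bij_betw_def by auto

lemma idxn_inj[simp]: "idxn (x :: 'n::finite) = idxn y \<longleftrightarrow> x = y"
  using idxn_bij unfolding bij_betw_def inj_on_def by auto

lemma idxi_idxn[simp]: "idxi (idxn (x :: 'n::finite)) = x"
proof -
  have "inj (idxn :: 'n \<Rightarrow> nat)" using idxn_bij bij_betw_imp_inj_on by blast
  thus ?thesis by (simp add: idxi_def)
qed

definition to_m :: "'a^'n^'n::finite \<Rightarrow> 'a mat" where
  "to_m A = Matrix.mat CARD('n) CARD('n) (\<lambda>(i,j). A $ idxi i $ idxi j)"

definition from_m :: "'a mat \<Rightarrow> 'a^'n^'n::finite" where
  "from_m M = (\<chi> i j. M $$ (idxn i, idxn j))"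

lemma to_m_carrier[simp]: "to_m (A :: 'a^'n^'n::finite) \<in> carrier_mat CARD('n) CARD('n)"
  by (simp add: to_m_def)

lemma from_to_m[simp]: "from_m (to_m A) = A"
  by (simp add: from_m_def to_m_def vec_eq_iff)

lemma to_m_transpose: "to_m (transpose A) = transpose_mat (to_m (A :: 'a^'n^'n::finite))"
  by (rule eq_matI) (auto simp: to_m_def transpose_def)

lemma from_m_one: "(from_m (1\<^sub>m CARD('n)) :: 'a::{zero,one}^'n^'n::finite) = Finite_Cartesian_Product.mat 1"
  by (simp add: from_m_def vec_eq_iff Finite_Cartesian_Product.mat_def)

lemma from_m_mult:
  fixes M P :: "'a::comm_semiring_1 mat"
  assumes M: "M \<in> carrier_mat CARD('n::finite) CARD('n)" and P: "P \<in> carrier_mat CARD('n) CARD('n)"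
  shows "(from_m (M * P) :: 'a^'n^'n) = from_m M ** from_m P"
proof -
  have "(M * P) $$ (idxn i, idxn j) = (\<Sum>k\<in>(UNIV::'n set). M $$ (idxn i, idxn k) * P $$ (idxn k, idxn j))"
    for i j :: 'n
  proof -
    have "(M * P) $$ (idxn i, idxn j) = (\<Sum>k\<in>{0..<CARD('n)}. M $$ (idxn i, k) * P $$ (k, idxn j))"
      using M P by (simp add: scalar_prod_def)
    also have "\<dots> = (\<Sum>k\<in>{..<CARD('n)}. M $$ (idxn i, k) * P $$ (k, idxn j))"
      by (simp add: atLeast0LessThan)
    also have "\<dots> = (\<Sum>k\<in>(UNIV::'n set). M $$ (idxn i, idxn k) * P $$ (idxn k, idxn j))"
      by (rule sum.reindex_bij_betw[symmetric]) (rule idxn_bij)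
    finally show ?thesis .
  qed
  thus ?thesis by (simp add: from_m_def vec_eq_iff matrix_matrix_mult_def)
qed

lemma matrix_inv_eq:
  fixes Q X :: "'a::semiring_1^'n^'n"
  assumes "Q ** X = Finite_Cartesian_Product.mat 1" "X ** Q = Finite_Cartesian_Product.mat 1"
  shows "matrix_inv Q = X"
proof -
  let ?I = "Finite_Cartesian_Product.mat 1 :: 'a^'n^'n"
  have ex: "\<exists>Y. Q ** Y = ?I \<and> Y ** Q = ?I" using assms by blast
  have "Q ** matrix_inv Q = ?I \<and> matrix_inv Q ** Q = ?I"
    unfolding matrix_inv_def by (rule someI_ex[OF ex])
  hence "Q ** matrix_inv Q = ?I" by blast
  hence "X ** (Q ** matrix_inv Q) = X" by simp
  thus ?thesis using assms(2) by (simp add: matrix_mul_assoc)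
qed

lemma matrix_inv_props:
  fixes Q :: "'a::semiring_1^'n^'n"
  assumes "invertible Q"
  shows "Q ** matrix_inv Q = Finite_Cartesian_Product.mat 1" "matrix_inv Q ** Q = Finite_Cartesian_Product.mat 1"
proof -
  let ?I = "Finite_Cartesian_Product.mat 1 :: 'a^'n^'n"
  have ex: "\<exists>Y. Q ** Y = ?I \<and> Y ** Q = ?I" using assms by (simp add: invertible_def)
  have "Q ** matrix_inv Q = ?I \<and> matrix_inv Q ** Q = ?I"
    unfolding matrix_inv_def by (rule someI_ex[OF ex])
  thus "Q ** matrix_inv Q = ?I" "matrix_inv Q ** Q = ?I" by blast+
qed

definition simi :: "complex^'n^'n \<Rightarrow> complex^'n^'n \<Rightarrow> bool" where
  "simi X Y \<longleftrightarrow> (\<exists>Q. invertible Q \<and> matrix_inv Q ** X ** Q = Y)"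

lemma simi_T: "simi (transpose A) (A :: complex^'n^'n)"
proof -
  have "similar_mat (transpose_mat (to_m A)) (to_m A)"
    by (rule complex_transpose_sim[OF to_m_carrier])
  from similar_matD[OF this] obtain n P Q where
    c: "{transpose_mat (to_m A), to_m A, P, Q} \<subseteq> carrier_mat n n" and PQ: "P * Q = 1\<^sub>m n" and QP: "Q * P = 1\<^sub>m n"
    and e: "transpose_mat (to_m A) = P * to_m A * Q" by blast
  have cT: "to_m A \<in> carrier_mat n n" using c by blast
  have n: "n = CARD('n)" using carrier_matD(1)[OF cT] carrier_matD(1)[OF to_m_carrier[of A]] by simp
  have cP: "P \<in> carrier_mat CARD('n) CARD('n)" and cQ: "Q \<in> carrier_mat CARD('n) CARD('n)"
    using c unfolding n by blast+
  have PA: "P * to_m A \<in> carrier_mat CARD('n) CARD('n)" using cP by simp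
  have t: "transpose A = (from_m P ** A ** from_m Q :: complex^'n^'n)"
  proof -
    have "transpose A = (from_m (to_m (transpose A)) :: complex^'n^'n)" by simp
    also have "\<dots> = from_m (P * to_m A * Q)" unfolding to_m_transpose e ..
    also have "\<dots> = from_m (P * to_m A) ** from_m Q" by (rule from_m_mult[OF PA cQ])
    also have "from_m (P * to_m A) = (from_m P ** from_m (to_m A) :: complex^'n^'n)"
      by (rule from_m_mult[OF cP to_m_carrier])
    finally show ?thesis by simp
  qed
  have 1: "(from_m P ** from_m Q :: complex^'n^'n) = Finite_Cartesian_Product.mat 1"
  proof -
    have "(from_m P ** from_m Q :: complex^'n^'n) = from_m (P * Q)" by (rule from_m_mult[symmetric, OF cP cQ])
    also have "\<dots> = Finite_Cartesian_Product.mat 1" unfolding PQ n by (rule from_m_one)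
    finally show ?thesis .
  qed
  have 2: "(from_m Q ** from_m P :: complex^'n^'n) = Finite_Cartesian_Product.mat 1"
  proof -
    have "(from_m Q ** from_m P :: complex^'n^'n) = from_m (Q * P)" by (rule from_m_mult[symmetric, OF cQ cP])
    also have "\<dots> = Finite_Cartesian_Product.mat 1" unfolding QP n by (rule from_m_one)
    finally show ?thesis .
  qed
  have inv: "invertible (from_m P :: complex^'n^'n)" using 1 2 by (auto simp: invertible_def)
  have mi: "matrix_inv (from_m P :: complex^'n^'n) = from_m Q" by (rule matrix_inv_eq[OF 1 2])
  have "matrix_inv (from_m P) ** transpose A ** (from_m P :: complex^'n^'n) = A"
  proof -
    have "from_m Q ** (from_m P ** A ** from_m Q) ** from_m P
       = (from_m Q ** from_m P) ** A ** (from_m Q ** (from_m P :: complex^'n^'n))"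
      by (simp add: matrix_mul_assoc)
    thus ?thesis unfolding t mi 2 by simp
  qed
  thus ?thesis unfolding simi_def using inv by blast
qed



lemma if_times0: "(if P then a else 0) * b = (if P then a * b else (0::complex))"
  "b * (if P then a else 0) = (if P then b * a else (0::complex))" by simp_all

abbreviation sm :: "'a::zero \<Rightarrow> 'a^'n^'n" where "sm c \<equiv> Finite_Cartesian_Product.mat c"

lemma sm_mul: "sm c ** (M :: complex^'n^'n) = (\<chi> i j. c * M$i$j)"
  by (intro Finite_Cartesian_Product.vec_eq_iff[THEN iffD2] allI) (simp add: matrix_matrix_mult_def Finite_Cartesian_Product.mat_def if_times0)

lemma mul_sm: "(M :: complex^'n^'n) ** sm c = (\<chi> i j. M$i$j * c)"
  by (intro Finite_Cartesian_Product.vec_eq_iff[THEN iffD2] allI) (simp add: matrix_matrix_mult_def Finite_Cartesian_Product.mat_def if_times0)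

lemma sm_comm: "sm c ** (M :: complex^'n^'n) = M ** sm c"
  by (simp add: sm_mul mul_sm mult.commute)

lemma mul_sm_assoc: "(X :: complex^'n^'n) ** (sm c ** Y) = sm c ** (X ** Y)"
  by (metis matrix_mul_assoc sm_comm)

lemma sm_sm: "sm a ** sm b = (sm (a*b) :: complex^'n^'n)"
  unfolding sm_mul by (intro Finite_Cartesian_Product.vec_eq_iff[THEN iffD2] allI) (simp add: Finite_Cartesian_Product.mat_def)

lemma neg_mul: "(- X) ** (Y :: complex^'n^'n) = - (X ** Y)"
  by (intro Finite_Cartesian_Product.vec_eq_iff[THEN iffD2] allI) (simp add: matrix_matrix_mult_def sum_negf)

lemma mul_neg: "(X :: complex^'n^'n) ** (- Y) = - (X ** Y)"
  by (intro Finite_Cartesian_Product.vec_eq_iff[THEN iffD2] allI) (simp add: matrix_matrix_mult_def sum_negf)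

lemma add_mul: "(X + Y) ** (Z :: complex^'n^'n) = X ** Z + Y ** Z"
  by (intro Finite_Cartesian_Product.vec_eq_iff[THEN iffD2] allI) (simp add: matrix_matrix_mult_def distrib_right sum.distrib)

lemma mc_mul: "mat_cnj (X ** (Y :: complex^'n^'n)) = mat_cnj X ** mat_cnj Y"
  by (intro Finite_Cartesian_Product.vec_eq_iff[THEN iffD2] allI) (simp add: mat_cnj_def matrix_matrix_mult_def cnj_sum)

lemma mc_sm: "mat_cnj (sm c :: complex^'n^'n) = sm (cnj c)"
  by (intro Finite_Cartesian_Product.vec_eq_iff[THEN iffD2] allI) (simp add: mat_cnj_def Finite_Cartesian_Product.mat_def)

lemma mc_transpose: "mat_cnj (transpose X) = transpose (mat_cnj (X :: complex^'n^'n))"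
  by (intro Finite_Cartesian_Product.vec_eq_iff[THEN iffD2] allI) (simp add: mat_cnj_def transpose_def)

lemma mc_mc: "mat_cnj (mat_cnj (X :: complex^'n^'n)) = X"
  by (intro Finite_Cartesian_Product.vec_eq_iff[THEN iffD2] allI) (simp add: mat_cnj_def)

lemma mc_neg: "mat_cnj (- X) = - mat_cnj (X :: complex^'n^'n)"
  by (intro Finite_Cartesian_Product.vec_eq_iff[THEN iffD2] allI) (simp add: mat_cnj_def)

lemma adj_entry: "adjoint_mat X $ i $ j = cnj (X $ j $ i)"
  by (simp add: adjoint_mat_def transpose_def mat_cnj_def)

lemma adj_mul: "adjoint_mat (X ** (Y :: complex^'n^'n)) = adjoint_mat Y ** adjoint_mat X"
  by (simp add: adjoint_mat_def mc_mul matrix_transpose_mul)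

lemma adj_adj: "adjoint_mat (adjoint_mat (X :: complex^'n^'n)) = X"
  by (simp add: adjoint_mat_def mc_transpose mc_mc)

lemma adj_sm: "adjoint_mat (sm c :: complex^'n^'n) = sm (cnj c)"
  by (simp add: adjoint_mat_def mc_sm)

lemma adj_neg: "adjoint_mat (- X) = - adjoint_mat (X :: complex^'n^'n)"
  by (intro Finite_Cartesian_Product.vec_eq_iff[THEN iffD2] allI) (simp add: adj_entry)

lemma inv_inv:
  fixes Q :: "complex^'n^'n"
  assumes "invertible Q"
  shows "invertible (matrix_inv Q)" "matrix_inv (matrix_inv Q) = Q"
proof -
  note p = matrix_inv_props[OF assms]
  show "invertible (matrix_inv Q)" using p unfolding invertible_def by blast
  show "matrix_inv (matrix_inv Q) = Q" by (rule matrix_inv_eq[OF p(2) p(1)])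
qed

lemma simi_sym: "simi X Y \<Longrightarrow> simi Y X"
proof -
  assume "simi X Y"
  then obtain Q where Q: "invertible Q" and e: "matrix_inv Q ** X ** Q = Y" by (auto simp: simi_def)
  note p = matrix_inv_props[OF Q]
  have "Q ** Y ** matrix_inv Q = (Q ** matrix_inv Q) ** X ** (Q ** matrix_inv Q)"
    unfolding e[symmetric] by (simp add: matrix_mul_assoc)
  hence "matrix_inv (matrix_inv Q) ** Y ** matrix_inv Q = X" unfolding p inv_inv[OF Q] by simp
  thus "simi Y X" unfolding simi_def using inv_inv(1)[OF Q] by blast
qed

lemma simi_trans: "simi X Y \<Longrightarrow> simi Y Z \<Longrightarrow> simi X Z"
proof -
  assume "simi X Y" "simi Y Z"
  then obtain Q1 Q2 where Q1: "invertible Q1" and e1: "matrix_inv Q1 ** X ** Q1 = Y"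
    and Q2: "invertible Q2" and e2: "matrix_inv Q2 ** Y ** Q2 = Z" by (auto simp: simi_def)
  note p1 = matrix_inv_props[OF Q1] and p2 = matrix_inv_props[OF Q2]
  have a: "(Q1 ** Q2) ** (matrix_inv Q2 ** matrix_inv Q1) = Finite_Cartesian_Product.mat 1"
  proof -
    have "(Q1 ** Q2) ** (matrix_inv Q2 ** matrix_inv Q1) = Q1 ** (Q2 ** matrix_inv Q2) ** matrix_inv Q1"
      by (simp add: matrix_mul_assoc)
    also have "\<dots> = Finite_Cartesian_Product.mat 1" by (simp add: p1(1) p2(1))
    finally show ?thesis .
  qed
  have b: "(matrix_inv Q2 ** matrix_inv Q1) ** (Q1 ** Q2) = Finite_Cartesian_Product.mat 1"
  proof -
    have "(matrix_inv Q2 ** matrix_inv Q1) ** (Q1 ** Q2) = matrix_inv Q2 ** (matrix_inv Q1 ** Q1) ** Q2"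
      by (simp add: matrix_mul_assoc)
    also have "\<dots> = Finite_Cartesian_Product.mat 1" by (simp add: p1(2) p2(2))
    finally show ?thesis .
  qed
  have mi: "matrix_inv (Q1 ** Q2) = matrix_inv Q2 ** matrix_inv Q1" by (rule matrix_inv_eq[OF a b])
  have "matrix_inv (Q1 ** Q2) ** X ** (Q1 ** Q2) = matrix_inv Q2 ** (matrix_inv Q1 ** X ** Q1) ** Q2"
    unfolding mi by (simp add: matrix_mul_assoc)
  hence "matrix_inv (Q1 ** Q2) ** X ** (Q1 ** Q2) = Z" unfolding e1 e2 .
  thus "simi X Z" unfolding simi_def using invertible_mult[OF Q1 Q2] by blast
qed

lemma simi_neg: "simi X Y \<Longrightarrow> simi (- X) (- Y)"
  unfolding simi_def by (auto simp: neg_mul mul_neg)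

lemma det_poly_ex:
  fixes C0 C1 :: "complex^'n^'n"
  shows "\<exists>p. \<forall>t. poly p t = Determinants.det (\<chi> i j. C0$i$j + t * C1$i$j)"
proof -
  define p where "p = (\<Sum>q\<in>{q. q permutes (UNIV::'n set)}. of_int (sign q) *
      (\<Prod>i\<in>UNIV. [: C0$i$(q i), C1$i$(q i) :]))"
  have "poly p t = Determinants.det (\<chi> i j. C0$i$j + t * C1$i$j)" for t
    unfolding p_def Determinants.det_def by (simp add: poly_sum poly_prod)
  thus ?thesis by blast
qed


lemma neg_sm: "(- W) ** sm c = sm (- c) ** (W :: complex^'n^'n)"
  unfolding sm_mul mul_sm by (intro Finite_Cartesian_Product.vec_eq_iff[THEN iffD2] allI) simp

lemma forward:
  fixes A :: "complex^'n^'n"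
  assumes "G_Hamiltonian A"
  shows "simi A (- mat_cnj A)"
proof -
  from assms obtain G S where G: "invertible G" and hG: "hermitian_mat G" and hS: "hermitian_mat S"
    and A: "A = sm \<i> ** (matrix_inv G ** S)" unfolding G_Hamiltonian_def by blast
  note p = matrix_inv_props[OF G]
  have GA: "G ** A = sm \<i> ** S"
  proof -
    have "G ** A = sm \<i> ** ((G ** matrix_inv G) ** S)" unfolding A mul_sm_assoc by (simp add: matrix_mul_assoc)
    thus ?thesis unfolding p by simp
  qed
  have h1: "adjoint_mat A ** G = - (G ** A)"
  proof -
    have "adjoint_mat A ** G = adjoint_mat (G ** A)"
      using hG by (simp add: adj_mul hermitian_mat_def)
    also have "\<dots> = S ** sm (- \<i>)" unfolding GA adj_mul adj_sm using hS by (simp add: hermitian_mat_def)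
    also have "\<dots> = - (sm \<i> ** S)" unfolding sm_mul mul_sm
      by (intro Finite_Cartesian_Product.vec_eq_iff[THEN iffD2] allI) simp
    finally show ?thesis unfolding GA .
  qed
  have "matrix_inv (matrix_inv G) ** (- A) ** matrix_inv G = adjoint_mat A"
  proof -
    have "matrix_inv (matrix_inv G) ** (- A) ** matrix_inv G = - (G ** A) ** matrix_inv G"
      unfolding inv_inv(2)[OF G] mul_neg ..
    also have "\<dots> = adjoint_mat A ** (G ** matrix_inv G)" unfolding h1[symmetric] by (simp add: matrix_mul_assoc)
    also have "\<dots> = adjoint_mat A" unfolding p by simp
    finally show ?thesis .
  qed
  hence s1: "simi (- A) (adjoint_mat A)" unfolding simi_def using inv_inv(1)[OF G] by blast
  have "simi (adjoint_mat A) (mat_cnj A)" unfolding adjoint_mat_def by (rule simi_T)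
  from simi_neg[OF simi_trans[OF s1 this]] show ?thesis by simp
qed

definition Vp :: "complex^'n^'n \<Rightarrow> complex^'n^'n \<Rightarrow> bool" where
  "Vp A Y \<longleftrightarrow> adjoint_mat A ** Y = - (Y ** A)"

lemma Vp_comb: "Vp A Y \<Longrightarrow> Vp A Z \<Longrightarrow> Vp A (sm a ** Y + sm b ** Z)"
  unfolding Vp_def matrix_add_ldistrib add_mul mul_sm_assoc
  by (simp add: mul_neg matrix_mul_assoc[symmetric] mul_sm_assoc)

lemma Vp_adj: "Vp A Y \<Longrightarrow> Vp A (adjoint_mat Y)"
proof -
  assume "Vp A Y"
  hence "adjoint_mat (adjoint_mat A ** Y) = adjoint_mat (- (Y ** A))" unfolding Vp_def by simp
  hence "adjoint_mat Y ** A = - (adjoint_mat A ** adjoint_mat Y)" by (simp add: adj_mul adj_adj adj_neg)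
  thus "Vp A (adjoint_mat Y)" unfolding Vp_def by simp
qed

lemma exists_real_nonroot:
  fixes p :: "complex poly"
  assumes "p \<noteq> 0"
  shows "\<exists>r::real. poly p (of_real r) \<noteq> 0"
proof (rule ccontr)
  assume "\<not> ?thesis"
  hence "range (of_real :: real \<Rightarrow> complex) \<subseteq> {z. poly p z = 0}" by auto
  hence "finite (range (of_real :: real \<Rightarrow> complex))"
    using poly_roots_finite[OF assms] finite_subset by blast
  hence "finite (UNIV :: real set)" using finite_imageD inj_of_real by blast
  thus False by (simp add: infinite_UNIV_char_0)
qed

lemma backward:
  fixes A :: "complex^'n^'n"
  assumes "simi A (- mat_cnj A)"
  shows "G_Hamiltonian A"
proof -
  have "simi (- A) (mat_cnj A)" using simi_neg[OF assms] by simp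
  moreover have "simi (mat_cnj A) (adjoint_mat A)" unfolding adjoint_mat_def by (rule simi_sym[OF simi_T])
  ultimately have "simi (- A) (adjoint_mat A)" by (rule simi_trans)
  then obtain P where P: "invertible P" and e: "matrix_inv P ** (- A) ** P = adjoint_mat A"
    unfolding simi_def by blast
  note pP = matrix_inv_props[OF P]
  define X where "X = matrix_inv P"
  have X: "invertible X" unfolding X_def by (rule inv_inv(1)[OF P])
  have VX: "Vp A X"
  proof -
    have "adjoint_mat A ** X = matrix_inv P ** (- A) ** (P ** matrix_inv P)"
      unfolding e[symmetric] X_def by (simp add: matrix_mul_assoc)
    also have "\<dots> = - (X ** A)" unfolding pP X_def by (simp add: mul_neg)
    finally show ?thesis unfolding Vp_def .
  qed
  define M where "M t = sm ((1 - \<i> * t) / 2) ** X + sm ((1 + \<i> * t) / 2) ** adjoint_mat X" for t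
  have VM: "Vp A (M t)" for t unfolding M_def by (rule Vp_comb[OF VX Vp_adj[OF VX]])
  have Me: "M t = (\<chi> i j. ((X$i$j + cnj (X$j$i)) / 2) + t * (\<i> * (cnj (X$j$i) - X$i$j) / 2))" for t
    unfolding M_def sm_mul
    by (intro Finite_Cartesian_Product.vec_eq_iff[THEN iffD2] allI) (simp add: adj_entry field_simps)
  obtain pl where pl: "\<And>t. poly pl t = Determinants.det (M t)"
    using det_poly_ex[of "\<chi> i j. (X$i$j + cnj (X$j$i)) / 2" "\<chi> i j. \<i> * (cnj (X$j$i) - X$i$j) / 2"]
    unfolding Me by auto
  have "M \<i> = X" unfolding Me
    by (intro Finite_Cartesian_Product.vec_eq_iff[THEN iffD2] allI) (simp add: field_simps)
  hence "poly pl \<i> \<noteq> 0" using pl X invertible_det_nz by metis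
  hence "pl \<noteq> 0" by auto
  then obtain r :: real where r: "poly pl (of_real r) \<noteq> 0" using exists_real_nonroot by blast
  define G where "G = M (of_real r)"
  have G: "invertible G" unfolding G_def using r pl invertible_det_nz by metis
  have hG: "hermitian_mat G" unfolding hermitian_mat_def G_def Me
    by (intro Finite_Cartesian_Product.vec_eq_iff[THEN iffD2] allI)
      (simp add: adj_entry algebra_simps diff_divide_distrib add_divide_distrib)
  have VG: "adjoint_mat A ** G = - (G ** A)" using VM unfolding G_def Vp_def by blast
  note pG = matrix_inv_props[OF G]
  define S where "S = sm (- \<i>) ** (G ** A)"
  have hS: "hermitian_mat S"
  proof -
    have "adjoint_mat S = (adjoint_mat A ** G) ** sm \<i>" unfolding S_def adj_mul adj_sm
      using hG by (simp add: hermitian_mat_def)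
    also have "\<dots> = S" unfolding VG S_def neg_sm ..
    finally show ?thesis unfolding hermitian_mat_def .
  qed
  have AA: "sm \<i> ** (matrix_inv G ** S) = A"
  proof -
    have "matrix_inv G ** S = sm (- \<i>) ** (matrix_inv G ** (G ** A))"
      unfolding S_def by (rule mul_sm_assoc)
    also have "\<dots> = sm (- \<i>) ** A" by (simp add: matrix_mul_assoc pG)
    finally have "sm \<i> ** (matrix_inv G ** S) = (sm \<i> ** sm (- \<i>)) ** A"
      by (simp add: matrix_mul_assoc)
    also have "\<dots> = A" unfolding sm_sm by simp
    finally show ?thesis .
  qed
  show ?thesis unfolding G_Hamiltonian_def using G hG hS AA[symmetric] by blast
qed

theorem theorem1:
  fixes A :: "complex^'n^'n"
  shows "G_Hamiltonian A \<longleftrightarrow>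
    (\<exists>Q :: complex^'n^'n. invertible Q \<and> matrix_inv Q ** A ** Q = - mat_cnj A)"
  using forward backward unfolding simi_def by blast


end
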